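(* MPS is not sd-weakly-strategyproof on the domain of strict linear orders over bundles. Concretely, for $n=2$, $p=2$, $D_F=\{1_F,2_F\}$, $D_B=\{1_B,2_B\}$, with true preferences $1_F2_B\succ_1 1_F1_B\succ_1 2_F1_B\succ_1 2_F2_B$ and $1_F1_B\succ_2 2_F1_B\succ_2 2_F2_B\succ_2 1_F2_B$, if agent 1 reports $2_F1_B\succ'_1 1_F1_B\succ'_1 1_F2_B\succ'_1 2_F2_B$, then agent 1's MPS allocation under the misreport weakly stochastically dominates her truthful MPS allocation w.r.t. $\succ_1$ and differs from it.
   Context: Setting: agents $N=\{1,\dots,n\}$; types $D_i$ pairwise disjoint, $|D_i|=n$, unit supply; bundles $\mathcal D=\prod_i D_i$; strict linear orders $\succ_j$ on $\mathcal D$. An assignment is an $n\times|\mathcal D|$ matrix $(p_{j,x})$ with entries in $[0,1]$, rows summing to $1$, and $\sum_j\sum_{x\ni o}p_{j,x}=1$ for each item $o$. $U(\succ,x)=\{y:y\succ x\}\cup\{x\}$; $p$ weakly stochastically dominates $q$ w.r.t. $\succ$ if $\sum_{y\in U(\succ,x)}p_y\ge\sum_{y\in U(\succ,x)}q_y$ for all $x$. A mechanism $f$ is sd-weakly-strategyproof if for every profile $R$, agent $j$ and report $\succ'_j$, with $R'=(\succ'_j,\succ_{-j})$: if $f(R')_j$ weakly stochastically dominates $f(R)_j$ w.r.t. $\succ_j$ then $f(R')_j=f(R)_j$. MPS: items start with supply $1$; a bundle is available if all its items have positive remaining supply. Continuously in time each agent eats her (reported) most preferred available bundle at rate $1$ (each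 item of it consumed at rate $1$, $p_{j,x}$ growing at rate $1$); exhausted items make all bundles containing them unavailable; run until all items are exhausted. *)

theory Defs
  imports Main Complex_Main
begin

(* A bundle is represented by the list of
  its items (one item of each type); item o belongs to bundle x iff o <in> set x.
  A strict linear order over the bundles is represented by a ranking list
  (best first, distinct, containing every bundle exactly once). *)

type_synonym 'i bdl = "'i list"
type_synonym 'i ranking = "'i bdl list"
type_synonym 'i assignment = "nat \<Rightarrow> 'i bdl \<Rightarrow> real"

definition upper :: "'i ranking \<Rightarrow> 'i bdl \<Rightarrow> 'i bdl set" where
  "upper r x = set (takeWhile (\<lambda>y. y \<noteq> x) r) \<union> {x}"

definition sd_dom :: "'i ranking \<Rightarrow> ('i bdl \<Rightarrow> real) \<Rightarrow> ('i bdl \<Rightarrow> real) \<Rightarrow> bool" where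
  "sd_dom r p q = (\<forall>x\<in>set r. sum p (upper r x) \<ge> sum q (upper r x))"

(* The continuous
  eating process is piecewise linear; we simulate it phase by phase. *)

definition available :: "('i \<Rightarrow> real) \<Rightarrow> 'i bdl \<Rightarrow> bool" where
  "available s x = (\<forall>a\<in>set x. 0 < s a)"

definition eating :: "('i \<Rightarrow> real) \<Rightarrow> 'i ranking \<Rightarrow> 'i bdl option" where
  "eating s r = find (available s) r"

definition rate :: "nat \<Rightarrow> (nat \<Rightarrow> 'i ranking) \<Rightarrow> ('i \<Rightarrow> real) \<Rightarrow> 'i \<Rightarrow> nat" where
  "rate n prefs s a = card {j. j < n \<and> (\<exists>x. eating s (prefs j) = Some x \<and> a \<in> set x)}"

definition mps_step :: "nat \<Rightarrow> 'i set \<Rightarrow> (nat \<Rightarrow> 'i ranking) \<Rightarrow>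
    ('i \<Rightarrow> real) \<times> 'i assignment \<Rightarrow> ('i \<Rightarrow> real) \<times> 'i assignment" where
  "mps_step n Os prefs st =
    (let s = fst st; P = snd st; c = rate n prefs s;
         active = {a \<in> Os. 0 < c a} in
     if active = {} then st
     else
       (let d = Min ((\<lambda>a. s a / real (c a)) ` active) in
        (\<lambda>a. s a - d * real (c a),
         \<lambda>j x. P j x + (if j < n \<and> eating s (prefs j) = Some x then d else 0))))"

(* Each phase exhausts at least one item, so card Os phases suffice; once no
  agent has an available bundle the step is the identity. *)
definition mps :: "nat \<Rightarrow> 'i set \<Rightarrow> (nat \<Rightarrow> 'i ranking) \<Rightarrow> 'i assignment" where
  "mps n Os prefs = snd ((mps_step n Os prefs ^^ card Os) (\<lambda>a. 1, \<lambda>j x. 0))"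

datatype item = F1 | F2 | B1 | B2

definition items :: "item set" where
  "items = {F1, F2, B1, B2}"

definition true_prefs :: "nat \<Rightarrow> item ranking" where
  "true_prefs j = (if j = 0 then [[F1,B2],[F1,B1],[F2,B1],[F2,B2]]
                   else [[F1,B1],[F2,B1],[F2,B2],[F1,B2]])"

definition mis_prefs :: "nat \<Rightarrow> item ranking" where
  "mis_prefs = true_prefs(0 := [[F2,B1],[F1,B1],[F1,B2],[F2,B2]])"

end

theory Submission
  imports Defs
begin

lemma card2: "card {j. j < (2::nat) \<and> P j} = (if P 0 then 1 else 0) + (if P 1 then 1 else 0)"
proof -
  have "{j. j < (2::nat) \<and> P j} = (if P 0 then {0} else {}) \<union> (if P 1 then {1} else {})"
  proof (rule set_eqI)
    fix x :: nat
    have "x < 2 \<longleftrightarrow> x = 0 \<or> x = 1" by arith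
    then show "x \<in> {j. j < 2 \<and> P j} \<longleftrightarrow> x \<in> (if P 0 then {0} else {}) \<union> (if P 1 then {1} else {})"
      by (cases "x = 0"; cases "x = 1"; simp)
  qed
  then show ?thesis by auto
qed

lemma rate2: "rate 2 prefs s a =
   (if \<exists>x. eating s (prefs 0) = Some x \<and> a \<in> set x then 1 else 0) +
   (if \<exists>x. eating s (prefs 1) = Some x \<and> a \<in> set x then 1 else 0)"
  unfolding rate_def by (rule card2)

lemma step_gen:
  assumes "(\<lambda>a. real (rate 2 prefs s a)) = c"
    and "{a \<in> items. 0 < c a} = A" and "A \<noteq> {}"
    and "Min ((\<lambda>a. s a / c a) ` A) = d"
  shows "mps_step 2 items prefs (s,P) = (\<lambda>a. s a - d * c a,
      \<lambda>j x. P j x + (if j < 2 \<and> eating s (prefs j) = Some x then d else 0))"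
proof -
  have c: "\<And>a. real (rate 2 prefs s a) = c a" using assms(1) by metis
  have "\<And>a. (0 < rate 2 prefs s a) = (0 < c a)" using c by (metis of_nat_0_less_iff)
  then have hA: "{a \<in> items. 0 < rate 2 prefs s a} = A" using assms(2) by simp
  then show ?thesis using assms(3) unfolding mps_step_def Let_def fst_conv snd_conv c hA assms(4) by simp
qed

lemma step_id:
  assumes "\<And>a. a \<in> items \<Longrightarrow> rate 2 prefs (fst st) a = 0"
  shows "mps_step 2 items prefs st = st"
  using assms unfolding mps_step_def Let_def by auto


lemma step_gen':
  assumes "(\<lambda>a. real (rate 2 prefs s a)) = c"
    and "{a \<in> items. 0 < c a} = A" and "A \<noteq> {}"
    and "Min ((\<lambda>a. s a / c a) ` A) = d"
    and "(\<lambda>a. s a - d * c a) = s'"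
  shows "mps_step 2 items prefs (s,P) = (s',
      \<lambda>j x. P j x + (if j < 2 \<and> eating s (prefs j) = Some x then d else 0))"
  using step_gen[OF assms(1-4)] assms(5) by simp

lemma avail0: "available (\<lambda>a. 0) x = (x = [])"
  by (cases x) (auto simp: available_def)

lemma stepX:
  assumes "fst st = (\<lambda>a. 0)" "prefs = true_prefs \<or> prefs = mis_prefs"
  shows "mps_step 2 items prefs st = st"
  apply (rule step_id)
  using assms(2) by (auto simp add: assms(1) rate2 eating_def avail0 true_prefs_def mis_prefs_def)

definition "cf a b c d = (\<lambda>x. case x of F1 \<Rightarrow> a | F2 \<Rightarrow> b | B1 \<Rightarrow> c | B2 \<Rightarrow> (d::real))"

lemma cf_simps[simp]: "cf a b c d F1 = a" "cf a b c d F2 = b" "cf a b c d B1 = c" "cf a b c d B2 = d"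
  by (simp_all add: cf_def)

lemma card_items: "card items = 4" by (simp add: items_def)


lemma T1: "mps_step 2 items true_prefs (cf 1 1 1 1, P) = (cf 0 1 (1/2) (1/2),
   \<lambda>j x. P j x + (if j < 2 \<and> eating (cf 1 1 1 1) (true_prefs j) = Some x then 1/2 else 0))"
  apply (rule step_gen'[where c="cf 2 0 1 1" and A="{F1,B1,B2}" and d="1/2"])
  apply (rule ext, case_tac a, simp_all add: rate2 eating_def available_def true_prefs_def)[1]
  apply (rule set_eqI, case_tac x, auto simp: items_def)[1]
  apply simp
  apply simp
  apply (rule ext, case_tac a, simp_all)
  done

lemma T2: "mps_step 2 items true_prefs (cf 0 1 (1/2) (1/2), P) = (cf 0 (1/2) 0 (1/2),
   \<lambda>j x. P j x + (if j < 2 \<and> eating (cf 0 1 (1/2) (1/2)) (true_prefs j) = Some x then 1/4 else 0))"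
  apply (rule step_gen'[where c="cf 0 2 2 0" and A="{F2,B1}" and d="1/4"])
  apply (rule ext, case_tac a, simp_all add: rate2 eating_def available_def true_prefs_def)[1]
  apply (rule set_eqI, case_tac x, auto simp: items_def)[1]
  apply simp
  apply simp
  apply (rule ext, case_tac a, simp_all)
  done

lemma T3: "mps_step 2 items true_prefs (cf 0 (1/2) 0 (1/2), P) = (cf 0 0 0 0,
   \<lambda>j x. P j x + (if j < 2 \<and> eating (cf 0 (1/2) 0 (1/2)) (true_prefs j) = Some x then 1/4 else 0))"
  apply (rule step_gen'[where c="cf 0 2 0 2" and A="{F2,B2}" and d="1/4"])
  apply (rule ext, case_tac a, simp_all add: rate2 eating_def available_def true_prefs_def)[1]
  apply (rule set_eqI, case_tac x, auto simp: items_def)[1]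
  apply simp
  apply simp
  apply (rule ext, case_tac a, simp_all)
  done

lemma M1: "mps_step 2 items mis_prefs (cf 1 1 1 1, P) = (cf (1/2) (1/2) 0 1,
   \<lambda>j x. P j x + (if j < 2 \<and> eating (cf 1 1 1 1) (mis_prefs j) = Some x then 1/2 else 0))"
  apply (rule step_gen'[where c="cf 1 1 2 0" and A="{F1,F2,B1}" and d="1/2"])
  apply (rule ext, case_tac a, simp_all add: rate2 eating_def available_def mis_prefs_def true_prefs_def)[1]
  apply (rule set_eqI, case_tac x, auto simp: items_def)[1]
  apply simp
  apply simp
  apply (rule ext, case_tac a, simp_all)
  done

lemma M2: "mps_step 2 items mis_prefs (cf (1/2) (1/2) 0 1, P) = (cf 0 0 0 0,
   \<lambda>j x. P j x + (if j < 2 \<and> eating (cf (1/2) (1/2) 0 1) (mis_prefs j) = Some x then 1/2 else 0))"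
  apply (rule step_gen'[where c="cf 1 1 0 2" and A="{F1,F2,B2}" and d="1/2"])
  apply (rule ext, case_tac a, simp_all add: rate2 eating_def available_def mis_prefs_def true_prefs_def)[1]
  apply (rule set_eqI, case_tac x, auto simp: items_def)[1]
  apply simp
  apply simp
  apply (rule ext, case_tac a, simp_all)
  done

lemma pow4: "(f ^^ 4) x = f (f (f (f x)))" by (simp add: numeral_eq_Suc)

lemma cf0: "cf 0 0 0 0 = (\<lambda>a. 0)" by (rule ext, case_tac a, simp_all)
lemma cf1: "(\<lambda>a. 1) = cf 1 1 1 1" by (rule ext, case_tac a, simp_all)

lemma mpsT: "mps 2 items true_prefs 0 = (\<lambda>x. (if x = [F1,B2] then 1/2 else 0) + (if x = [F2,B1] then 1/4 else 0) + (if x = [F2,B2] then 1/4 else 0))"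
proof -
  have "(mps_step 2 items true_prefs ^^ 4) (cf 1 1 1 1, \<lambda>j x. 0) =
     (cf 0 0 0 0, \<lambda>j x. 0 + (if j < 2 \<and> eating (cf 1 1 1 1) (true_prefs j) = Some x then 1/2 else 0)
       + (if j < 2 \<and> eating (cf 0 1 (1/2) (1/2)) (true_prefs j) = Some x then 1/4 else 0)
       + (if j < 2 \<and> eating (cf 0 (1/2) 0 (1/2)) (true_prefs j) = Some x then 1/4 else 0))"
    by (simp add: pow4 T1 T2 T3 stepX cf0)
  moreover have "eating (cf 1 1 1 1) (true_prefs 0) = Some [F1,B2]"
     "eating (cf 0 1 (1/2) (1/2)) (true_prefs 0) = Some [F2,B1]"
     "eating (cf 0 (1/2) 0 (1/2)) (true_prefs 0) = Some [F2,B2]"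
    by (simp_all add: eating_def available_def true_prefs_def)
  ultimately show ?thesis unfolding mps_def card_items cf1 by (auto simp: fun_eq_iff)
qed

lemma mpsM: "mps 2 items mis_prefs 0 = (\<lambda>x. (if x = [F2,B1] then 1/2 else 0) + (if x = [F1,B2] then 1/2 else 0))"
proof -
  have "(mps_step 2 items mis_prefs ^^ 4) (cf 1 1 1 1, \<lambda>j x. 0) =
     (cf 0 0 0 0, \<lambda>j x. 0 + (if j < 2 \<and> eating (cf 1 1 1 1) (mis_prefs j) = Some x then 1/2 else 0)
       + (if j < 2 \<and> eating (cf (1/2) (1/2) 0 1) (mis_prefs j) = Some x then 1/2 else 0))"
    by (simp add: pow4 M1 M2 stepX cf0)
  moreover have "eating (cf 1 1 1 1) (mis_prefs 0) = Some [F2,B1]"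
     "eating (cf (1/2) (1/2) 0 1) (mis_prefs 0) = Some [F1,B2]"
    by (simp_all add: eating_def available_def mis_prefs_def true_prefs_def)
  ultimately show ?thesis unfolding mps_def card_items cf1 by (auto simp: fun_eq_iff)
qed

theorem mainTheorem16:
  shows "sd_dom (true_prefs 0) (mps 2 items mis_prefs 0) (mps 2 items true_prefs 0)
         \<and> mps 2 items mis_prefs 0 \<noteq> mps 2 items true_prefs 0"
proof
  show "mps 2 items mis_prefs 0 \<noteq> mps 2 items true_prefs 0"
    unfolding mpsT mpsM by (auto simp: fun_eq_iff dest: spec[of _ "[F2,B1]"])
  show "sd_dom (true_prefs 0) (mps 2 items mis_prefs 0) (mps 2 items true_prefs 0)"
  proof -
    have r: "true_prefs 0 = [[F1,B2],[F1,B1],[F2,B1],[F2,B2]]" by (simp add: true_prefs_def)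
    have u: "upper (true_prefs 0) [F1,B2] = {[F1,B2]}"
      "upper (true_prefs 0) [F1,B1] = {[F1,B1],[F1,B2]}"
      "upper (true_prefs 0) [F2,B1] = {[F2,B1],[F1,B2],[F1,B1]}"
      "upper (true_prefs 0) [F2,B2] = {[F2,B2],[F1,B2],[F1,B1],[F2,B1]}"
      by (auto simp: upper_def r)
    show ?thesis unfolding sd_dom_def
      apply (simp only: r set_simps ball_simps)
      apply (simp only: r[symmetric] u)
      apply (simp add: mpsT mpsM)
      done
  qed
qed

end
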